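(* Consider user $m$ of cluster $\text{C}_2$ in the RIS-partitioned downlink system described in the context, with uncorrelated RIS channels $\mathbf{R}_{\text{RIS}}=\mathbf{I}_N$ (i.i.d. Rayleigh fading). Let $\gamma_m^*$ be its target rate, $\rho=P/\sigma^2$ the transmit SNR, and define $y=\frac{2^{\gamma_m^*}-1}{\rho}$, $\mu_1=\sqrt{L_m^{\text{RIS}}}\,N_m\frac{\sqrt{\pi}}{2}$, $s_1^2=L_m^{\text{RIS}}N_m\frac{4-\pi}{4}$, and $s_2^2=0.5\,(2^{\gamma_m^*}-1)\big(L_m^{\text{RIS}}(N-N_m)+L_m^{\text{BS}}\big)$. Then the outage probability $P_m^{\text{out}}=P(R_m<\gamma_m^* )$ is given by $$P^{\text{out}}_m=1-Q_{\frac{1}{2}}\!\left(\frac{\mu_1}{s_1},\sqrt{\frac{y}{s_1^2}}\right)+\left(\frac{s_2^2}{s_1^2+s_2^2}\right)^{\frac{1}{2}}\exp\!\left(\frac{y}{2s_2^2}\right)\exp\!\left(-\frac{\mu_1^2}{2(s_1^2+s_2^2)}\right)Q_{\frac{1}{2}}\!\left(\frac{\mu_1}{s_1}\sqrt{\frac{s_2^2}{s_1^2+s_2^2}},\sqrt{\frac{y(s_1^2+s_2^2)}{s_1^2s_2^2}}\right),$$ where $Q_k(a,b)$ denotes the $k$-th order generalized Marcum $Q$-function.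
   Context: System model: a single-antenna base station (BS) with transmit power $P$ and an RIS with $N$ reflecting elements serve single-antenna users; the users in cluster $\text{C}_2$ (users $m=1,\dots,M_2$, inside the RIS field of view) are served via the RIS. The RIS is partitioned into $M_2$ disjoint sub-surfaces, sub-surface $i$ having $N_i$ elements, $\sum_{i=1}^{M_2}N_i=N$, and sub-surface $i$ is dedicated to user $i$. The channel from element $n$ of sub-surface $i$ to user $m$ is $\sqrt{L_m^{\text{RISg}}}\,g_{i,m}^{(n)}$ with $g_{i,m}^{(n)}=\beta_{i,m}^{(n)}e^{-j\phi_{i,m}^{(n)}}$; under the uncorrelated assumption the $g_{i,m}^{(n)}$ are i.i.d. $\mathcal{CN}(0,1)$ (so $\beta_{i,m}^{(n)}$ are Rayleigh). The BS–RIS channel is pure LoS with path gain $L^{\text{RISh}}$ and phases $\psi^{(n)}$; $L_m^{\text{RIS}}=L^{\text{RISh}}L_m^{\text{RISg}}$. The direct BS–user-$m$ channel is $v_m\sim\mathcal{CN}(0,L_m^{\text{BS}})$, independent of the RIS channels. Element $n$ of sub-surface $i$ applies phase $\Phi_i^{(n)}=\phi_{i,i}^{(n)}+\psi^{(n)}+\theta_i+\theta_{M_1}$, where $\theta_i$ is the PSK symbol of user $i$ and $\theta_{M_1}$ is the phase of the unit-modulus BS signal. Writing $\bar\Phi_i^{(n)}=-\phi_{i,m}^{(n)}+\Phi_i^{(n)}$, user $m$ has signal power $A_m=\big|\sqrt{L_m^{\text{RIS}}}\sum_{n=1}^{N_m}\beta_{m,m}^{(n)}\big|^2$, interference $I_m=|I_{\text{RIS}}+v_m|^2$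 with $I_{\text{RIS}}=\sqrt{L_m^{\text{RIS}}}\sum_{i\ne m}\sum_{n=1}^{N_i}\beta_{i,m}^{(n)}e^{j\bar\Phi_i^{(n)}}$, and $\text{SINR}_m=\frac{A_m}{I_m+1/\rho}$ where $\rho=P/\sigma^2$ and $\sigma^2$ is the noise variance. The rate is $R_m=\log_2(1+\text{SINR}_m)$.
   Formalization: The signal amplitude $\sqrt{L_m^{\text{RIS}}}\sum_{n=1}^{N_m}\beta_{m,m}^{(n)}$ is replaced by an exactly Gaussian variable with mean $\mu_1$ and variance $s_1^2$, independent of $I_{\text{RIS}}$ and $v_m$, whose square is $A_m$. Apart from conventions, each condition added here is assumed in the paper as well or is needed for the statement above to hold. *)

theory Defs
  imports "HOL-Probability.Probability"
begin

definition bessel_I :: "real \<Rightarrow> real \<Rightarrow> real" where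
  "bessel_I nu x = (\<Sum>m. (x / 2) powr (2 * real m + nu) / (fact m * Gamma (real m + nu + 1)))"

definition marcumQ :: "real \<Rightarrow> real \<Rightarrow> real \<Rightarrow> real" where
  "marcumQ k a b = (1 / a powr (k - 1)) *
     (LINT x:{b..}|lborel. x powr k * exp (-(x\<^sup>2 + a\<^sup>2) / 2) * bessel_I (k - 1) (a * x))"

text \<open>Circularly-symmetric complex Gaussian CN(0,v): real and imaginary parts independent
  N(0, v/2); for v = 0 the degenerate distribution concentrated at 0.\<close>
definition CN_distributed :: "'a measure \<Rightarrow> ('a \<Rightarrow> complex) \<Rightarrow> real \<Rightarrow> bool" where
  "CN_distributed M Z v \<longleftrightarrow>
     (if v = 0 then Z \<in> borel_measurable M \<and> (AE \<omega> in M. Z \<omega> = 0)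
      else distributed M lborel (\<lambda>\<omega>. Re (Z \<omega>)) (normal_density 0 (sqrt (v / 2))) \<and>
           distributed M lborel (\<lambda>\<omega>. Im (Z \<omega>)) (normal_density 0 (sqrt (v / 2))) \<and>
           prob_space.indep_var M borel (\<lambda>\<omega>. Re (Z \<omega>)) borel (\<lambda>\<omega>. Im (Z \<omega>)))"

text \<open>Parameters of Proposition 1 (LRIS = L_m^RIS, LBS = L_m^BS, Nm = N_m).\<close>
definition mu1 :: "real \<Rightarrow> nat \<Rightarrow> real" where
  "mu1 LRIS Nm = sqrt LRIS * real Nm * sqrt pi / 2"

definition s1sq :: "real \<Rightarrow> nat \<Rightarrow> real" where
  "s1sq LRIS Nm = LRIS * real Nm * (4 - pi) / 4"

definition s2sq :: "real \<Rightarrow> real \<Rightarrow> nat \<Rightarrow> nat \<Rightarrow> real \<Rightarrow> real" where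
  "s2sq LRIS LBS N Nm g = 0.5 * (2 powr g - 1) * (LRIS * (real N - real Nm) + LBS)"

definition yval :: "real \<Rightarrow> real \<Rightarrow> real" where
  "yval g rho = (2 powr g - 1) / rho"

end

theory Submission
  imports Defs
begin

lemma Gamma_half_nat: "Gamma (real m + 1/2) = sqrt pi * fact (2*m) / (4^m * fact m)"
proof (induction m)
  case 0 then show ?case by (simp add: Gamma_one_half_real)
next
  case (Suc m)
  have "Gamma (real (Suc m) + 1/2) = (real m + 1/2) * Gamma (real m + 1/2)"
  proof -
    have "real m + 1/2 \<notin> \<int>\<^sub>\<le>\<^sub>0" using nonpos_Ints_nonpos[of "real m + 1/2"] by force
    then show ?thesis using Gamma_plus1[of "real m + 1/2"] by (simp add: add_ac)
  qed
  also have "\<dots> = sqrt pi * fact (2 * Suc m) / (4 ^ Suc m * fact (Suc m))"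
  proof -
    have f1: "(fact (2 * Suc m) :: real) = (2*real m+2)*(2*real m+1)*fact (2*m)"
      by (simp add: algebra_simps)
    have f2: "(fact (Suc m) :: real) = (real m + 1) * fact m" by simp
    have a0: "\<And>F fm Q r::real. fm \<noteq> 0 \<Longrightarrow> Q \<noteq> 0 \<Longrightarrow> r \<noteq> 0 \<Longrightarrow> (r - 1/2) * (sqrt pi * F / (Q * fm)) =
       sqrt pi * ((2*r)*(2*r-1)*F) / ((4 * Q) * (r * fm))"
      by (simp add: field_simps)
    have a: "\<And>F fm Q::real. fm \<noteq> 0 \<Longrightarrow> Q \<noteq> 0 \<Longrightarrow> (real m + 1/2) * (sqrt pi * F / (Q * fm)) =
       sqrt pi * ((2*real m+2)*(2*real m+1)*F) / ((4 * Q) * ((real m + 1) * fm))"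
      using a0[of _ _ "real m + 1"] by (simp add: algebra_simps)
    show ?thesis unfolding Suc.IH f1 f2 power_Suc by (rule a) auto
  qed
  finally show ?case .
qed

lemma cosh_even_sums: "(\<lambda>m. z ^ (2*m) / fact (2*m)) sums cosh (z::real)"
proof -
  have "(\<lambda>n. (\<lambda>n. if even n then z ^ n /\<^sub>R fact n else 0) (2*n)) sums cosh z
        \<longleftrightarrow> (\<lambda>n. if even n then z ^ n /\<^sub>R fact n else 0) sums cosh z"
    by (rule sums_mono_reindex) (auto simp: strict_mono_def elim!: evenE)
  then show ?thesis using cosh_converges[of z] by (simp add: divide_inverse mult.commute)
qed

lemma aux_field: "fm \<noteq> (0::real) \<Longrightarrow> Q \<noteq> 0 \<Longrightarrow> s \<noteq> 0 \<Longrightarrow> F \<noteq> 0 \<Longrightarrow>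
   P * w / (fm * (s * F / (Q * fm))) = (P / s) * ((w * Q) / F)"
  by (simp add: field_simps)

lemma bessel_half:
  assumes z: "z > 0"
  shows "bessel_I (1/2 - 1) z = sqrt (2 / (pi * z)) * cosh z"
proof -
  have eq: "(z / 2) powr (2 * real m + (1/2 - 1)) / (fact m * Gamma (real m + (1/2 - 1) + 1))
        = ((z/2) powr (-(1/2)) / sqrt pi) * (z ^ (2*m) / fact (2*m))" for m
  proof -
    have g: "Gamma (real m + (1/2 - 1) + 1) = sqrt pi * fact (2*m) / (4^m * fact m)"
      using Gamma_half_nat[of m] by (simp add: add_ac)
    have p: "(z / 2) powr (2 * real m + (1/2 - 1)) = (z/2) powr (-(1/2)) * (z/2)^(2*m)"
    proof -
      have "(z / 2) powr (2 * real m + (1/2 - 1)) = (z/2) powr (-(1/2) + real (2*m))" by (simp add: add_ac)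
      also have "\<dots> = (z/2) powr (-(1/2)) * (z/2)^(2*m)" using z by (simp only: powr_add powr_realpow)
      finally show ?thesis .
    qed
    have q: "(z/2)^(2*m) * 4^m = z^(2*m)"
    proof -
      have "(z/2)^(2*m) = (z^2/4)^m" by (simp add: power_mult power_divide)
      then show ?thesis by (simp add: power_divide power_mult)
    qed
    show ?thesis unfolding g p aux_field[OF fact_nonzero _ _ fact_nonzero] using q by simp
  qed
  have "(\<lambda>m. (z / 2) powr (2 * real m + (1/2 - 1)) / (fact m * Gamma (real m + (1/2 - 1) + 1)))
          sums (((z/2) powr (-(1/2)) / sqrt pi) * cosh z)"
    unfolding eq by (intro sums_mult cosh_even_sums)
  then have "bessel_I (1/2 - 1) z = ((z/2) powr (-(1/2)) / sqrt pi) * cosh z"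
    unfolding bessel_I_def by (simp add: sums_iff)
  also have "(z/2) powr (-(1/2)) = 1 / sqrt (z/2)"
    using z by (simp add: powr_minus_divide powr_half_sqrt)
  also have "1 / sqrt (z/2) / sqrt pi = sqrt (2 / (pi * z))"
    using z by (simp add: real_sqrt_divide real_sqrt_mult)
  finally show ?thesis .
qed

lemma marcum_pw:
  assumes a: "a > 0" and x: "x > 0"
  shows "1 / a powr (1/2 - 1) * (x powr (1/2) * exp (-(x\<^sup>2 + a\<^sup>2) / 2) * bessel_I (1/2 - 1) (a * x))
       = normal_density a 1 x + normal_density (-a) 1 x"
proof -
  have b: "bessel_I (1/2 - 1) (a * x) = sqrt (2 / (pi * (a * x))) * ((exp (a*x) + exp (-(a*x))) / 2)"
    using bessel_half[of "a*x"] a x by (simp add: cosh_field_def)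
  have p1: "1 / a powr (1/2 - 1) = sqrt a"
  proof -
    have "a powr (1/2 - 1) = a powr (-(1/2))" by simp
    also have "\<dots> = 1 / sqrt a" using a by (simp add: powr_minus_divide powr_half_sqrt)
    finally show ?thesis by simp
  qed
  have p2: "x powr (1/2) = sqrt x" using x by (simp add: powr_half_sqrt)
  have e1: "exp (-(x\<^sup>2 + a\<^sup>2) / 2) * exp (a*x) = exp (-(x - a)\<^sup>2 / 2)"
  proof -
    have "-(x - a)\<^sup>2 / 2 = -(x\<^sup>2 + a\<^sup>2) / 2 + a*x" by (simp add: power2_eq_square field_simps)
    then show ?thesis by (simp add: exp_add)
  qed
  have e2: "exp (-(x\<^sup>2 + a\<^sup>2) / 2) * exp (-(a*x)) = exp (-(x - -a)\<^sup>2 / 2)"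
  proof -
    have "exp (-(x - -a)\<^sup>2 / 2) = exp (-(x\<^sup>2 + a\<^sup>2) / 2 + -(a*x))"
      by (rule arg_cong[where f=exp]) (simp add: power2_eq_square field_simps)
    then show ?thesis unfolding exp_add by simp
  qed
  have s: "sqrt a * sqrt x * sqrt (2 / (pi * (a * x))) = sqrt 2 / sqrt pi"
  proof -
    have "sqrt a * sqrt x * sqrt (2 / (pi * (a * x))) = sqrt (a * x * (2 / (pi * (a * x))))"
      by (simp only: real_sqrt_mult)
    also have "a * x * (2 / (pi * (a * x))) = 2 / pi" using a x by (simp add: field_simps)
    finally show ?thesis by (simp add: real_sqrt_divide)
  qed
  have c: "sqrt 2 / sqrt pi / 2 = 1 / sqrt (2 * pi)"
    by (simp add: real_sqrt_mult field_simps)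
  have nd: "normal_density m 1 x = 1 / sqrt (2 * pi) * exp (-(x - m)\<^sup>2 / 2)" for m
    by (simp add: normal_density_def)
  have "1 / a powr (1/2 - 1) * (x powr (1/2) * exp (-(x\<^sup>2 + a\<^sup>2) / 2) * bessel_I (1/2 - 1) (a * x))
      = (sqrt a * sqrt x * sqrt (2 / (pi * (a * x)))) / 2 *
        (exp (-(x\<^sup>2 + a\<^sup>2) / 2) * exp (a*x) + exp (-(x\<^sup>2 + a\<^sup>2) / 2) * exp (-(a*x)))"
    unfolding p1 p2 b by (simp add: algebra_simps)
  also have "\<dots> = normal_density a 1 x + normal_density (-a) 1 x"
    unfolding s e1 e2 nd c[symmetric] by (simp add: algebra_simps)
  finally show ?thesis .
qed

lemma marcum_half:
  assumes a: "a > 0" and b: "b > 0"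
  shows "marcumQ (1/2) a b = (\<integral>x. indicator {b..} x * (normal_density a 1 x + normal_density (-a) 1 x) \<partial>lborel)"
proof -
  have "marcumQ (1/2) a b = (LINT x:{b..}|lborel. 1 / a powr (1/2 - 1) *
      (x powr (1/2) * exp (-(x\<^sup>2 + a\<^sup>2) / 2) * bessel_I (1/2 - 1) (a * x)))"
    unfolding marcumQ_def by (simp only: set_integral_mult_right)
  also have "\<dots> = (\<integral>x. indicator {b..} x * (normal_density a 1 x + normal_density (-a) 1 x) \<partial>lborel)"
    unfolding set_lebesgue_integral_def
  proof (rule Bochner_Integration.integral_cong)
    fix x :: real
    show "indicator {b..} x *\<^sub>R (1 / a powr (1/2 - 1) *
      (x powr (1/2) * exp (-(x\<^sup>2 + a\<^sup>2) / 2) * bessel_I (1/2 - 1) (a * x))) =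
      indicator {b..} x * (normal_density a 1 x + normal_density (-a) 1 x)"
    proof (cases "b \<le> x")
      case True
      then have "x > 0" using b by simp
      show ?thesis using marcum_pw[OF a \<open>x > 0\<close>] True by simp
    qed simp
  qed simp
  finally show ?thesis .
qed

lemma nd_scale:
  assumes s: "\<sigma> > 0"
  shows "\<sigma> * normal_density \<mu> \<sigma> (\<sigma> * u) = normal_density (\<mu>/\<sigma>) 1 u"
proof -
  have e: "(\<sigma>*u - \<mu>)\<^sup>2 / (2*\<sigma>\<^sup>2) = (u - \<mu>/\<sigma>)\<^sup>2 / 2"
    using s by (simp add: field_simps power2_eq_square)
  have q: "sqrt (2*pi*\<sigma>\<^sup>2) = sqrt (2*pi) * \<sigma>"
    using s by (simp add: real_sqrt_mult)
  show ?thesis unfolding normal_density_def q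
    using e s by (simp add: field_simps)
qed

lemma nd_neg: "normal_density a 1 (-x) = normal_density (-a) 1 x"
  by (simp add: normal_density_def power2_eq_square algebra_simps)

lemma tail_marcum:
  assumes s: "\<sigma> > 0" and m: "\<mu> > 0" and y: "y > 0"
  shows "(\<integral>x. normal_density \<mu> \<sigma> x * indicator {x. y < x\<^sup>2} x \<partial>lborel)
       = marcumQ (1/2) (\<mu>/\<sigma>) (sqrt y/\<sigma>)"
proof -
  define a where "a = \<mu>/\<sigma>"
  define b where "b = sqrt y/\<sigma>"
  have a: "a > 0" using s m by (simp add: a_def)
  have b: "b > 0" using s y by (simp add: b_def)
  have int1: "integrable lborel (\<lambda>u. normal_density c 1 u * indicator A u)" if "A \<in> sets borel" for c A
    using that by (intro integrable_real_mult_indicator) auto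
  have "(\<integral>x. normal_density \<mu> \<sigma> x * indicator {x. y < x\<^sup>2} x \<partial>lborel)
      = \<sigma> * (\<integral>u. normal_density \<mu> \<sigma> (\<sigma>*u) * indicator {x. y < x\<^sup>2} (\<sigma>*u) \<partial>lborel)"
    using lborel_integral_real_affine[of \<sigma> "\<lambda>x. normal_density \<mu> \<sigma> x * indicator {x. y < x\<^sup>2} x" 0] s
    by simp
  also have "\<dots> = (\<integral>u. normal_density a 1 u * indicator {b<..} u + normal_density a 1 u * indicator {..<-b} u \<partial>lborel)"
    unfolding integral_mult_right_zero[symmetric]
  proof (rule Bochner_Integration.integral_cong)
    fix u :: real
    have iff: "y < (\<sigma>*u)\<^sup>2 \<longleftrightarrow> b < \<bar>u\<bar>"
    proof -
      have "y < (\<sigma>*u)\<^sup>2 \<longleftrightarrow> sqrt y < sqrt ((\<sigma>*u)\<^sup>2)" by (simp only: real_sqrt_less_iff)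
      also have "\<dots> \<longleftrightarrow> sqrt y < \<sigma> * \<bar>u\<bar>" using s by (simp add: abs_mult)
      also have "\<dots> \<longleftrightarrow> b < \<bar>u\<bar>" using s by (simp add: b_def pos_divide_less_eq mult.commute)
      finally show ?thesis .
    qed
    have i: "indicator {x. y < x\<^sup>2} (\<sigma>*u) = (indicator {b<..} u + indicator {..<-b} u :: real)"
      using iff b by (auto simp: indicator_def)
    show "\<sigma> * (normal_density \<mu> \<sigma> (\<sigma>*u) * indicator {x. y < x\<^sup>2} (\<sigma>*u)) =
      normal_density a 1 u * indicator {b<..} u + normal_density a 1 u * indicator {..<-b} u"
      unfolding i a_def nd_scale[OF s, symmetric] by (simp add: algebra_simps)
  qed simp
  also have "\<dots> = (\<integral>u. normal_density a 1 u * indicator {b<..} u \<partial>lborel) +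
                  (\<integral>u. normal_density a 1 u * indicator {..<-b} u \<partial>lborel)"
    by (rule Bochner_Integration.integral_add) (auto intro: int1)
  also have "(\<integral>u. normal_density a 1 u * indicator {..<-b} u \<partial>lborel)
           = (\<integral>u. normal_density (-a) 1 u * indicator {b<..} u \<partial>lborel)"
  proof -
    have "(\<integral>u. normal_density a 1 u * indicator {..<-b} u \<partial>lborel)
        = (\<integral>u. normal_density a 1 (-u) * indicator {..<-b} (-u) \<partial>lborel)"
      using lborel_integral_real_affine[of "-1" "\<lambda>u. normal_density a 1 u * indicator {..<-b} u" 0] by simp
    also have "\<dots> = (\<integral>u. normal_density (-a) 1 u * indicator {b<..} u \<partial>lborel)"
      by (rule Bochner_Integration.integral_cong) (auto simp: nd_neg indicator_def)
    finally show ?thesis .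
  qed
  also have "(\<integral>u. normal_density a 1 u * indicator {b<..} u \<partial>lborel) +
             (\<integral>u. normal_density (-a) 1 u * indicator {b<..} u \<partial>lborel)
           = (\<integral>u. normal_density a 1 u * indicator {b<..} u + normal_density (-a) 1 u * indicator {b<..} u \<partial>lborel)"
    by (rule Bochner_Integration.integral_add[symmetric]) (auto intro: int1)
  also have "\<dots> = (\<integral>x. indicator {b..} x * (normal_density a 1 x + normal_density (-a) 1 x) \<partial>lborel)"
  proof (rule integral_cong_AE)
    show "AE x in lborel. normal_density a 1 x * indicator {b<..} x + normal_density (-a) 1 x * indicator {b<..} x
        = indicator {b..} x * (normal_density a 1 x + normal_density (-a) 1 x)"
      using AE_lborel_singleton[of b] by eventually_elim (auto simp: indicator_def)
  qed auto
  also have "\<dots> = marcumQ (1/2) a b"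
    using marcum_half[OF a b] by simp
  finally show ?thesis unfolding a_def b_def .
qed

lemma exid:
  fixes a b D x \<mu> :: real
  assumes a: "a > 0" and b: "b > 0" and D: "D > 0" and hD: "D = a + b"
  shows "-(x - \<mu>)\<^sup>2 / (2 * a) + -x\<^sup>2/(2 * b)
      = -(\<mu>\<^sup>2)/(2 * D) + -(x - \<mu> * b/D)\<^sup>2 / (2 * (a * b/D))"
  using a b D
  apply (simp add: field_simps power2_eq_square)
  apply (simp add: hD algebra_simps)
  done

lemma gauss_prod:
  assumes a: "a > 0" and b: "b > 0"
  shows "normal_density \<mu> (sqrt a) x * exp (-x\<^sup>2/(2 * b))
       = sqrt (b/(a+b)) * exp (-(\<mu>\<^sup>2)/(2 * (a+b))) * normal_density (\<mu> * b/(a+b)) (sqrt (a * b/(a+b))) x"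
proof -
  have ab: "a + b > 0" using a b by simp
  have c1: "sqrt (2 * pi * (sqrt (a * b/(a+b)))\<^sup>2) = sqrt (2 * pi * a) * sqrt (b/(a+b))"
  proof -
    have "(sqrt (a * b/(a+b)))\<^sup>2 = a * b/(a+b)" using a b ab by simp
    then have "2 * pi * (sqrt (a * b/(a+b)))\<^sup>2 = (2 * pi * a) * (b/(a+b))" by simp
    then show ?thesis by (simp only: real_sqrt_mult)
  qed
  have c2: "(sqrt a)\<^sup>2 = a" using a by simp
  have pos: "sqrt (b/(a+b)) > 0" using a b by simp
  have ex: "-(x - \<mu>)\<^sup>2 / (2 * a) + -x\<^sup>2/(2 * b)
      = -(\<mu>\<^sup>2)/(2 * (a+b)) + -(x - \<mu> * b/(a+b))\<^sup>2 / (2 * (a * b/(a+b)))"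
    using exid[OF a b ab refl] .

  have "normal_density \<mu> (sqrt a) x * exp (-x\<^sup>2/(2 * b))
      = 1 / sqrt (2 * pi * a) * exp (-(x - \<mu>)\<^sup>2 / (2 * a) + -x\<^sup>2/(2 * b))"
    unfolding normal_density_def c2 by (simp add: exp_add[symmetric])
  also have "\<dots> = 1 / sqrt (2 * pi * a) * (exp (-(\<mu>\<^sup>2)/(2 * (a+b))) * exp (-(x - \<mu> * b/(a+b))\<^sup>2 / (2 * (a * b/(a+b)))))"
    unfolding ex exp_add ..
  also have "\<dots> = sqrt (b/(a+b)) * exp (-(\<mu>\<^sup>2)/(2 * (a+b))) * normal_density (\<mu> * b/(a+b)) (sqrt (a * b/(a+b))) x"
  proof -
    have "(sqrt (a * b/(a+b)))\<^sup>2 = a * b/(a+b)" using a b ab by simp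
    then show ?thesis unfolding normal_density_def c1 using pos a b ab by (simp add: field_simps)
  qed
  finally show ?thesis .
qed

lemma final_real:
  assumes a: "a > 0" and b: "b > 0" and m: "\<mu> > 0" and y: "y > 0"
  shows "(\<integral>x. normal_density \<mu> (sqrt a) x * exp (- max 0 (x\<^sup>2 - y) / (2 * b)) \<partial>lborel)
    = 1 - marcumQ (1/2) (\<mu> / sqrt a) (sqrt (y / a))
      + (b / (a + b)) powr (1/2) * exp (y / (2 * b)) * exp (-(\<mu>\<^sup>2) / (2 * (a + b)))
        * marcumQ (1/2) (\<mu> / sqrt a * sqrt (b / (a + b))) (sqrt (y * (a + b) / (a * b)))"
proof -
  define q where "q = sqrt (b/(a+b))"
  define K where "K = q * exp (-(\<mu>\<^sup>2)/(2 * (a+b)))"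
  define m' where "m' = \<mu> * b/(a+b)"
  define s' where "s' = sqrt (a * b/(a+b))"
  define E where "E = exp (y/(2 * b))"
  have ab: "a + b > 0" using a b by simp
  have q: "q > 0" using a b by (simp add: q_def)
  have sa: "sqrt a > 0" using a by simp
  have sig: "s' = sqrt a * q"
  proof -
    have "a * b/(a+b) = a * (b/(a+b))" by simp
    then show ?thesis unfolding s'_def q_def by (simp only: real_sqrt_mult)
  qed
  have s': "s' > 0" using sig sa q by simp
  have q2: "q\<^sup>2 = b/(a+b)" using a b by (simp add: q_def)
  have mu: "m' = \<mu> * q\<^sup>2" by (simp add: m'_def q2)
  have m': "m' > 0" using m a b by (simp add: m'_def)
  let ?nd = "normal_density \<mu> (sqrt a)"
  let ?nd' = "normal_density m' s'"
  let ?I = "indicator {x. y < x\<^sup>2} :: real \<Rightarrow> real"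
  have Iset[measurable]: "{x::real. y < x\<^sup>2} \<in> sets borel" by measurable
  have pw: "?nd x * exp (- max 0 (x\<^sup>2 - y) / (2 * b)) = ?nd x - ?nd x * ?I x + E * (K * (?nd' x * ?I x))" for x
  proof (cases "y < x\<^sup>2")
    case True
    have e: "exp (- max 0 (x\<^sup>2 - y) / (2 * b)) = E * exp (-x\<^sup>2/(2 * b))"
    proof -
      have ee: "- max 0 (x\<^sup>2 - y) / (2 * b) = y/(2 * b) + -x\<^sup>2/(2 * b)"
        using True b by (simp add: field_simps)
      have "exp (- max 0 (x\<^sup>2 - y) / (2 * b)) = exp (y/(2 * b) + -x\<^sup>2/(2 * b))"
        unfolding ee ..
      then show ?thesis by (simp only: exp_add E_def)
    qed
    have g: "?nd x * exp (-x\<^sup>2/(2 * b)) = K * ?nd' x"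
      using gauss_prod[OF a b, of \<mu> x] by (simp add: K_def q_def m'_def s'_def)
    show ?thesis unfolding e using True g by (simp add: algebra_simps)
  next
    case False
    then have "max 0 (x\<^sup>2 - y) = 0" by simp
    then show ?thesis using False by simp
  qed
  have int2: "integrable lborel (\<lambda>x. ?nd x * ?I x)"
    by (rule integrable_real_mult_indicator) (auto intro: integrable_normal_density[OF sa])
  have int3: "integrable lborel (\<lambda>x. ?nd' x * ?I x)"
    by (rule integrable_real_mult_indicator) (auto intro: integrable_normal_density[OF s'])
  note int1 = integrable_normal_density[OF sa]
  have "(\<integral>x. ?nd x * exp (- max 0 (x\<^sup>2 - y) / (2 * b)) \<partial>lborel)
      = (\<integral>x. ?nd x - ?nd x * ?I x + E * (K * (?nd' x * ?I x)) \<partial>lborel)"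
    unfolding pw ..
  also have "\<dots> = (\<integral>x. ?nd x - ?nd x * ?I x \<partial>lborel) + (\<integral>x. E * (K * (?nd' x * ?I x)) \<partial>lborel)"
    using int1 int2 int3 by (intro Bochner_Integration.integral_add) auto
  also have "(\<integral>x. ?nd x - ?nd x * ?I x \<partial>lborel) = (\<integral>x. ?nd x \<partial>lborel) - (\<integral>x. ?nd x * ?I x \<partial>lborel)"
    using int1 int2 by (intro Bochner_Integration.integral_diff) auto
  also have "(\<integral>x. ?nd x \<partial>lborel) = 1" by (rule integral_normal_density[OF sa])
  also have "(\<integral>x. E * (K * (?nd' x * ?I x)) \<partial>lborel) = E * (K * (\<integral>x. ?nd' x * ?I x \<partial>lborel))"
    by simp
  also have "(\<integral>x. ?nd x * ?I x \<partial>lborel) = marcumQ (1/2) (\<mu> / sqrt a) (sqrt y / sqrt a)"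
    by (rule tail_marcum[OF sa m y])
  also have "(\<integral>x. ?nd' x * ?I x \<partial>lborel) = marcumQ (1/2) (m' / s') (sqrt y / s')"
    by (rule tail_marcum[OF s' m' y])
  also have "m' / s' = \<mu> / sqrt a * sqrt (b / (a + b))"
    unfolding mu sig q_def[symmetric] using q sa by (simp add: power2_eq_square field_simps)
  also have "sqrt y / s' = sqrt (y * (a + b) / (a * b))"
  proof -
    have "y * (a + b) / (a * b) = y / (a * (b/(a+b)))" using a b ab by (simp add: field_simps)
    then show ?thesis unfolding sig q_def by (simp add: real_sqrt_divide real_sqrt_mult)
  qed
  also have "sqrt y / sqrt a = sqrt (y / a)" by (simp add: real_sqrt_divide)
  finally show ?thesis
    using a b by (simp add: K_def E_def q_def powr_half_sqrt algebra_simps)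
qed

lemma nn_even:
  fixes f :: "real \<Rightarrow> ennreal"
  assumes f[measurable]: "f \<in> borel_measurable borel" and ev: "\<And>x. f (-x) = f x"
  shows "(\<integral>\<^sup>+x. f x \<partial>lborel) = 2 * (\<integral>\<^sup>+x. f x * indicator {0..} x \<partial>lborel)"
proof -
  have "(\<integral>\<^sup>+x. f x \<partial>lborel) = (\<integral>\<^sup>+x. f x * indicator {0..} x + f x * indicator {..<0} x \<partial>lborel)"
    by (rule nn_integral_cong) (auto simp: indicator_def)
  also have "\<dots> = (\<integral>\<^sup>+x. f x * indicator {0..} x \<partial>lborel) + (\<integral>\<^sup>+x. f x * indicator {..<0} x \<partial>lborel)"
    by (rule nn_integral_add) auto
  also have "(\<integral>\<^sup>+x. f x * indicator {..<0} x \<partial>lborel) = (\<integral>\<^sup>+x. f (-x) * indicator {..<0} (-x) \<partial>lborel)"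
    using nn_integral_real_affine[of "\<lambda>x. f x * indicator {..<0} x" "-1" 0] by simp
  also have "\<dots> = (\<integral>\<^sup>+x. f x * indicator {0..} x \<partial>lborel)"
  proof (rule nn_integral_cong_AE)
    show "AE x in lborel. f (-x) * indicator {..<0} (-x) = f x * indicator {0..} x"
      using AE_lborel_singleton[of 0] by eventually_elim (auto simp: ev indicator_def)
  qed
  finally show ?thesis by (simp add: mult_2)
qed

lemma half_line:
  fixes k c :: real
  assumes k: "k > 0" and c: "c \<ge> 0"
  shows "(\<integral>\<^sup>+u. ennreal (\<bar>u\<bar> * exp (-(u\<^sup>2 * k)) * indicator {c<..} (u\<^sup>2 * k)) \<partial>lborel) = ennreal (exp (-c) / k)"
proof -
  define r where "r = sqrt (c / k)"
  have r: "r \<ge> 0" using c k by (simp add: r_def)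
  have rk: "r\<^sup>2 * k = c" using c k by (simp add: r_def)
  have "(\<integral>\<^sup>+u. ennreal (\<bar>u\<bar> * exp (-(u\<^sup>2 * k)) * indicator {c<..} (u\<^sup>2 * k)) \<partial>lborel)
      = 2 * (\<integral>\<^sup>+u. ennreal (\<bar>u\<bar> * exp (-(u\<^sup>2 * k)) * indicator {c<..} (u\<^sup>2 * k)) * indicator {0..} u \<partial>lborel)"
    by (rule nn_even) auto
  also have "(\<integral>\<^sup>+u. ennreal (\<bar>u\<bar> * exp (-(u\<^sup>2 * k)) * indicator {c<..} (u\<^sup>2 * k)) * indicator {0..} u \<partial>lborel)
      = (\<integral>\<^sup>+u. ennreal (u * exp (-(u\<^sup>2 * k))) * indicator {r..} u \<partial>lborel)"
  proof (rule nn_integral_cong_AE)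
    show "AE u in lborel. ennreal (\<bar>u\<bar> * exp (-(u\<^sup>2 * k)) * indicator {c<..} (u\<^sup>2 * k)) * indicator {0..} u
        = ennreal (u * exp (-(u\<^sup>2 * k))) * indicator {r..} u"
      using AE_lborel_singleton[of r]
    proof eventually_elim
      fix u :: real assume "u \<noteq> r"
      show "ennreal (\<bar>u\<bar> * exp (-(u\<^sup>2 * k)) * indicator {c<..} (u\<^sup>2 * k)) * indicator {0..} u
        = ennreal (u * exp (-(u\<^sup>2 * k))) * indicator {r..} u"
      proof (cases "0 \<le> u")
        case True
        have "c < u\<^sup>2 * k \<longleftrightarrow> r < u"
        proof -
          have "c < u\<^sup>2 * k \<longleftrightarrow> r\<^sup>2 < u\<^sup>2" using k by (simp add: rk[symmetric])
          also have "\<dots> \<longleftrightarrow> r < u" using r True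
          proof (intro iffI)
            assume "r\<^sup>2 < u\<^sup>2" then show "r < u" using True by (rule power_less_imp_less_base)
          next
            assume "r < u" then show "r\<^sup>2 < u\<^sup>2" by (rule power_strict_mono) (use r in auto)
          qed
          finally show ?thesis .
        qed
        then show ?thesis using True \<open>u \<noteq> r\<close> by (auto simp: indicator_def)
      next
        case False
        then show ?thesis using r by (auto simp: indicator_def)
      qed
    qed
  qed
  also have "\<dots> = ennreal (0 - (- exp (-(r\<^sup>2 * k)) / (2 * k)))"
  proof (rule nn_integral_FTC_atLeast)
    show "((\<lambda>u. - exp (-(u\<^sup>2 * k)) / (2 * k)) \<longlongrightarrow> 0) at_top"
    proof -
      have "((\<lambda>u. - exp (-(u\<^sup>2 * k)) / (2 * k)) \<longlongrightarrow> - 0 / (2 * k)) at_top"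
        apply (intro tendsto_intros filterlim_compose[OF exp_at_bot] filterlim_compose[OF filterlim_uminus_at_bot_at_top])
        apply (rule filterlim_at_top_mult_tendsto_pos[OF tendsto_const k])
        apply (insert k)
        apply (auto intro!: filterlim_at_top_mult_at_top[OF filterlim_ident filterlim_ident] simp: power2_eq_square)
        done
      then show ?thesis by simp
    qed
  next
    fix u :: real assume "r \<le> u"
    show "((\<lambda>u. - exp (-(u\<^sup>2 * k)) / (2 * k)) has_real_derivative u * exp (-(u\<^sup>2 * k))) (at u)"
      using k by (auto intro!: derivative_eq_intros simp: field_simps)
  next
    fix u :: real assume "r \<le> u"
    then show "0 \<le> u * exp (-(u\<^sup>2 * k))" using r by simp
  qed auto
  also have "2 * ennreal (0 - (- exp (-(r\<^sup>2 * k)) / (2 * k))) = ennreal (exp (-c) / k)"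
  proof -
    have e: "0 - (- exp (-(r\<^sup>2 * k)) / (2 * k)) = exp (-c) / (2 * k)" using rk by simp
    have "2 * ennreal (exp (-c) / (2 * k)) = ennreal (2 * (exp (-c) / (2 * k)))"
      using k by (subst ennreal_mult) auto
    also have "2 * (exp (-c) / (2 * k)) = exp (-c) / k" using k by simp
    finally show ?thesis unfolding e .
  qed
  finally show ?thesis .
qed

lemma cauchy_total: "(\<integral>\<^sup>+v. ennreal (1 / (pi * (1 + v\<^sup>2))) \<partial>lborel) = 1"
proof -
  have "(\<integral>\<^sup>+v. ennreal (1 / (pi * (1 + v\<^sup>2))) \<partial>lborel)
      = 2 * (\<integral>\<^sup>+v. ennreal (1 / (pi * (1 + v\<^sup>2))) * indicator {0..} v \<partial>lborel)"
    by (rule nn_even) auto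
  also have "(\<integral>\<^sup>+v. ennreal (1 / (pi * (1 + v\<^sup>2))) * indicator {0..} v \<partial>lborel) = ennreal (1/2 - arctan 0 / pi)"
  proof (rule nn_integral_FTC_atLeast)
    show "((\<lambda>v. arctan v / pi) \<longlongrightarrow> 1/2) at_top"
    proof -
      have "((\<lambda>v. arctan v / pi) \<longlongrightarrow> (pi/2) / pi) at_top"
        by (intro tendsto_intros) (simp_all add: tendsto_arctan_at_top)
      then show ?thesis by simp
    qed
  next
    fix v :: real
    show "((\<lambda>v. arctan v / pi) has_real_derivative 1 / (pi * (1 + v\<^sup>2))) (at v)"
      by (auto intro!: derivative_eq_intros simp: field_simps add_nonneg_eq_0_iff power2_eq_square)
  qed (auto simp: add_pos_nonneg)
  also have "2 * ennreal (1/2 - arctan 0 / pi) = ennreal (2 * (1/2))"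
    by (subst ennreal_mult) auto
  also have "\<dots> = 1" by simp
  finally show ?thesis .
qed

lemma gauss2_tail:
  assumes s: "s > 0" and c: "c \<ge> 0"
  shows "(\<integral>\<^sup>+u. \<integral>\<^sup>+w. ennreal (normal_density 0 s u * normal_density 0 s w * indicator {w. c < u\<^sup>2 + w\<^sup>2} w) \<partial>lborel \<partial>lborel)
       = ennreal (exp (-c/(2* s\<^sup>2)))"
proof -
  define L where "L = 2* s\<^sup>2"
  have L: "L > 0" using s by (simp add: L_def)
  have nd2: "normal_density 0 s u * normal_density 0 s w = exp (-(u\<^sup>2+w\<^sup>2)/L) / (pi* L)" for u w
  proof -
    have "normal_density 0 s u * normal_density 0 s w
        = (1/sqrt(2* pi* s\<^sup>2))\<^sup>2 * (exp (-u\<^sup>2/(2* s\<^sup>2)) * exp (-w\<^sup>2/(2* s\<^sup>2)))"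
      by (simp add: normal_density_def power2_eq_square)
    also have "(1/sqrt(2* pi* s\<^sup>2))\<^sup>2 = 1/(pi* L)"
      by (simp add: power_divide L_def)
    also have "exp (-u\<^sup>2/(2* s\<^sup>2)) * exp (-w\<^sup>2/(2* s\<^sup>2)) = exp (-(u\<^sup>2+w\<^sup>2)/L)"
      by (simp add: exp_add[symmetric] L_def add_divide_distrib diff_divide_distrib)
    finally show ?thesis by simp
  qed
  define G where "G u v = ennreal (1/(pi* L) * (\<bar>u\<bar> * exp (-(u\<^sup>2 * ((1+v\<^sup>2)/L))) * indicator {c/L<..} (u\<^sup>2 * ((1+v\<^sup>2)/L))))" for u v :: real
  have Gm[measurable]: "case_prod G \<in> borel_measurable (lborel \<Otimes>\<^sub>M lborel)"
    unfolding G_def by measurable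
  have "(\<integral>\<^sup>+u. \<integral>\<^sup>+w. ennreal (normal_density 0 s u * normal_density 0 s w * indicator {w. c < u\<^sup>2 + w\<^sup>2} w) \<partial>lborel \<partial>lborel)
      = (\<integral>\<^sup>+u. \<integral>\<^sup>+v. G u v \<partial>lborel \<partial>lborel)"
  proof (rule nn_integral_cong_AE)
    show "AE u in lborel. (\<integral>\<^sup>+w. ennreal (normal_density 0 s u * normal_density 0 s w * indicator {w. c < u\<^sup>2 + w\<^sup>2} w) \<partial>lborel)
        = (\<integral>\<^sup>+v. G u v \<partial>lborel)"
      using AE_lborel_singleton[of 0]
    proof eventually_elim
      fix u :: real assume u: "u \<noteq> 0"
      have "(\<integral>\<^sup>+w. ennreal (normal_density 0 s u * normal_density 0 s w * indicator {w. c < u\<^sup>2 + w\<^sup>2} w) \<partial>lborel)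
          = ennreal \<bar>u\<bar> * (\<integral>\<^sup>+v. ennreal (normal_density 0 s u * normal_density 0 s (0 + u * v) * indicator {w. c < u\<^sup>2 + w\<^sup>2} (0 + u * v)) \<partial>lborel)"
        by (rule nn_integral_real_affine) (auto simp: u)
      also have "\<dots> = (\<integral>\<^sup>+v. ennreal \<bar>u\<bar> * ennreal (normal_density 0 s u * normal_density 0 s (0 + u * v) * indicator {w. c < u\<^sup>2 + w\<^sup>2} (0 + u * v)) \<partial>lborel)"
        by (rule nn_integral_cmult[symmetric]) auto
      also have "\<dots> = (\<integral>\<^sup>+v. G u v \<partial>lborel)"
      proof (rule nn_integral_cong)
        fix v :: real
        have e1: "(u\<^sup>2 + (u* v)\<^sup>2) / L = u\<^sup>2 * ((1+v\<^sup>2)/L)" by (simp add: field_simps power2_eq_square)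
        have e1': "-(u\<^sup>2 + (u * v)\<^sup>2) / L = -(u\<^sup>2 * ((1+v\<^sup>2)/L))"
          by (metis e1 minus_divide_left)
        have e2: "c < u\<^sup>2 + (u* v)\<^sup>2 \<longleftrightarrow> c/L < u\<^sup>2 * ((1+v\<^sup>2)/L)"
          unfolding e1[symmetric] using L by (simp add: divide_less_cancel)
        have "ennreal \<bar>u\<bar> * ennreal (normal_density 0 s u * normal_density 0 s (0 + u * v) * indicator {w. c < u\<^sup>2 + w\<^sup>2} (0 + u * v))
            = ennreal (\<bar>u\<bar> * (normal_density 0 s u * normal_density 0 s (u * v) * indicator {w. c < u\<^sup>2 + w\<^sup>2} (u * v)))"
          by (simp add: ennreal_mult)
        also have "\<bar>u\<bar> * (normal_density 0 s u * normal_density 0 s (u * v) * indicator {w. c < u\<^sup>2 + w\<^sup>2} (u * v))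
            = 1/(pi* L) * (\<bar>u\<bar> * exp (-(u\<^sup>2 * ((1+v\<^sup>2)/L))) * indicator {c/L<..} (u\<^sup>2 * ((1+v\<^sup>2)/L)))"
          unfolding nd2 e1' using e2 by (simp add: indicator_def)
        finally show "ennreal \<bar>u\<bar> * ennreal (normal_density 0 s u * normal_density 0 s (0 + u * v) * indicator {w. c < u\<^sup>2 + w\<^sup>2} (0 + u * v)) = G u v"
          unfolding G_def .
      qed
      finally show "(\<integral>\<^sup>+w. ennreal (normal_density 0 s u * normal_density 0 s w * indicator {w. c < u\<^sup>2 + w\<^sup>2} w) \<partial>lborel)
        = (\<integral>\<^sup>+v. G u v \<partial>lborel)" .
    qed
  qed
  also have "\<dots> = (\<integral>\<^sup>+v. \<integral>\<^sup>+u. G u v \<partial>lborel \<partial>lborel)"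
    by (rule lborel_pair.Fubini'[symmetric]) (rule Gm)
  also have "\<dots> = (\<integral>\<^sup>+v. ennreal (exp (-c/L)) * ennreal (1 / (pi * (1 + v\<^sup>2))) \<partial>lborel)"
  proof (rule nn_integral_cong)
    fix v :: real
    have k: "(1+v\<^sup>2)/L > 0" using L by (simp add: add_pos_nonneg)
    have "(\<integral>\<^sup>+u. G u v \<partial>lborel) = (\<integral>\<^sup>+u. ennreal (1/(pi* L)) * ennreal (\<bar>u\<bar> * exp (-(u\<^sup>2 * ((1+v\<^sup>2)/L))) * indicator {c/L<..} (u\<^sup>2 * ((1+v\<^sup>2)/L))) \<partial>lborel)"
      unfolding G_def using L by (intro nn_integral_cong ennreal_mult) auto
    also have "\<dots> = ennreal (1/(pi* L)) * (\<integral>\<^sup>+u. ennreal (\<bar>u\<bar> * exp (-(u\<^sup>2 * ((1+v\<^sup>2)/L))) * indicator {c/L<..} (u\<^sup>2 * ((1+v\<^sup>2)/L))) \<partial>lborel)"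
      by (rule nn_integral_cmult) auto
    also have "\<dots> = ennreal (1/(pi* L)) * ennreal (exp (-(c/L)) / ((1+v\<^sup>2)/L))"
      using half_line[OF k, of "c/L"] c L by simp
    also have "\<dots> = ennreal (exp (-c/L)) * ennreal (1 / (pi * (1 + v\<^sup>2)))"
    proof -
      have "1/(pi* L) * (exp (-(c/L)) / ((1+v\<^sup>2)/L)) = exp (-c/L) * (1 / (pi * (1 + v\<^sup>2)))"
        using L k by (simp add: field_simps)
      then show ?thesis using L k by (simp add: ennreal_mult[symmetric])
    qed
    finally show "(\<integral>\<^sup>+u. G u v \<partial>lborel) = ennreal (exp (-c/L)) * ennreal (1 / (pi * (1 + v\<^sup>2)))" .
  qed
  also have "\<dots> = ennreal (exp (-c/L)) * (\<integral>\<^sup>+v. ennreal (1 / (pi * (1 + v\<^sup>2))) \<partial>lborel)"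
    by (rule nn_integral_cmult) auto
  also have "\<dots> = ennreal (exp (-c/(2* s\<^sup>2)))"
    unfolding cauchy_total L_def by simp
  finally show ?thesis .
qed

lemma (in prob_space) distributed_AE_cong:
  assumes "distributed M N X f" "AE \<omega> in M. X \<omega> = Y \<omega>" "Y \<in> measurable M N"
  shows "distributed M N Y f"
proof -
  have "distr M N Y = distr M N X"
    using assms by (intro distr_cong_AE) (auto simp: distributed_def AE_mp eq_commute)
  then show ?thesis using assms unfolding distributed_def by simp
qed

lemma (in prob_space) indep_var_AE_cong:
  assumes ind: "indep_var S X T Y" and ae: "AE \<omega> in M. X \<omega> = X' \<omega>" "AE \<omega> in M. Y \<omega> = Y' \<omega>"
    and m: "X' \<in> measurable M S" "Y' \<in> measurable M T"
  shows "indep_var S X' T Y'"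
proof -
  have rX: "X \<in> measurable M S" and rY: "Y \<in> measurable M T"
    using indep_var_rv1[OF ind] indep_var_rv2[OF ind] by auto
  have d: "distr M S X \<Otimes>\<^sub>M distr M T Y = distr M (S \<Otimes>\<^sub>M T) (\<lambda>x. (X x, Y x))"
    using ind indep_var_distribution_eq by blast
  have e1: "distr M S X' = distr M S X"
    using ae rX m by (intro distr_cong_AE) (auto simp: eq_commute)
  have e2: "distr M T Y' = distr M T Y"
    using ae rY m by (intro distr_cong_AE) (auto simp: eq_commute)
  have e3: "distr M (S \<Otimes>\<^sub>M T) (\<lambda>x. (X' x, Y' x)) = distr M (S \<Otimes>\<^sub>M T) (\<lambda>x. (X x, Y x))"
  proof (intro distr_cong_AE)
    show "AE x in M. (X' x, Y' x) = (X x, Y x)" using ae by eventually_elim auto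
  qed (use rX rY m in \<open>auto intro!: measurable_Pair\<close>)
  show ?thesis unfolding indep_var_distribution_eq e1 e2 e3 using d m by simp
qed

lemma (in prob_space) indep_vars_pair:
  assumes ind: "indep_vars (\<lambda>_. borel) G I" and ij: "i \<in> I" "j \<in> I" "i \<noteq> j"
  shows "indep_var borel (G i) borel (G j)"
proof -
  have "indep_var borel ((\<lambda>f. f i) \<circ> (\<lambda>\<omega>. restrict (\<lambda>k. G k \<omega>) {i}))
                  borel ((\<lambda>f. f j) \<circ> (\<lambda>\<omega>. restrict (\<lambda>k. G k \<omega>) {j}))"
    using ij by (intro indep_var_compose[OF indep_var_restrict[OF ind]]) auto
  also have "(\<lambda>f. f i) \<circ> (\<lambda>\<omega>. restrict (\<lambda>k. G k \<omega>) {i}) = G i" by auto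
  also have "(\<lambda>f. f j) \<circ> (\<lambda>\<omega>. restrict (\<lambda>k. G k \<omega>) {j}) = G j" by auto
  finally show ?thesis .
qed

lemma (in prob_space) indep_vars_pair_sum:
  fixes G :: "'i \<Rightarrow> 'a \<Rightarrow> real"
  assumes ind: "indep_vars (\<lambda>_. borel) G I" and ij: "i \<in> I" "j \<in> I" "k \<in> I" "l \<in> I"
    and d: "{i, j} \<inter> {k, l} = {}"
  shows "indep_var borel (\<lambda>\<omega>. G i \<omega> + G j \<omega>) borel (\<lambda>\<omega>. G k \<omega> + G l \<omega>)"
proof -
  have "indep_var borel ((\<lambda>f. f i + f j) \<circ> (\<lambda>\<omega>. restrict (\<lambda>k. G k \<omega>) {i, j}))
                  borel ((\<lambda>f. f k + f l) \<circ> (\<lambda>\<omega>. restrict (\<lambda>k. G k \<omega>) {k, l}))"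
    using ij d by (intro indep_var_compose[OF indep_var_restrict[OF ind]]) auto
  also have "(\<lambda>f. f i + f j) \<circ> (\<lambda>\<omega>. restrict (\<lambda>k. G k \<omega>) {i, j}) = (\<lambda>\<omega>. G i \<omega> + G j \<omega>)" by auto
  also have "(\<lambda>f. f k + f l) \<circ> (\<lambda>\<omega>. restrict (\<lambda>k. G k \<omega>) {k, l}) = (\<lambda>\<omega>. G k \<omega> + G l \<omega>)" by auto
  finally show ?thesis .
qed

lemma (in prob_space) four_indep:
  fixes Z1 Z2 :: "'a \<Rightarrow> complex"
  assumes ind: "indep_var borel Z1 borel Z2"
    and i1: "indep_var borel (\<lambda>\<omega>. Re (Z1 \<omega>)) borel (\<lambda>\<omega>. Im (Z1 \<omega>))"
    and i2: "indep_var borel (\<lambda>\<omega>. Re (Z2 \<omega>)) borel (\<lambda>\<omega>. Im (Z2 \<omega>))"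
  shows "indep_vars (\<lambda>_. borel) (\<lambda>i \<omega>. [Re (Z1 \<omega>), Im (Z1 \<omega>), Re (Z2 \<omega>), Im (Z2 \<omega>)] ! i) {0,1,2,3::nat}"
proof -
  have Z1[measurable]: "Z1 \<in> borel_measurable M" using indep_var_rv1[OF ind] by simp
  have Z2[measurable]: "Z2 \<in> borel_measurable M" using indep_var_rv2[OF ind] by simp
  define G where "G = (\<lambda>i \<omega>. [Re (Z1 \<omega>), Im (Z1 \<omega>), Re (Z2 \<omega>), Im (Z2 \<omega>)] ! i)"
  have rv: "random_variable borel (G i)" if "i \<in> {0,1,2,3}" for i
  proof -
    from that have "i = 0 \<or> i = 1 \<or> i = 2 \<or> i = 3" by auto
    then show ?thesis by (elim disjE) (simp_all add: G_def)
  qed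
  have eq: "indep_vars (\<lambda>_. borel) G {0,1,2,3} \<longleftrightarrow>
    (\<forall>A\<in>(\<Pi> i\<in>{0,1,2,3}. sets borel). prob (\<Inter>j\<in>{0,1,2,3}. G j -` A j \<inter> space M) = (\<Prod>j\<in>{0,1,2,3}. prob (G j -` A j \<inter> space M)))"
    by (rule indep_vars_finite) (auto simp: rv Int_stable_def sets.sigma_sets_eq[of borel, simplified])
  have "\<forall>A\<in>(\<Pi> i\<in>{0,1,2,3::nat}. sets borel). prob (\<Inter>j\<in>{0,1,2,3}. G j -` A j \<inter> space M) = (\<Prod>j\<in>{0,1,2,3}. prob (G j -` A j \<inter> space M))"
  proof
    fix A assume A: "A \<in> (\<Pi> i\<in>{0,1,2,3::nat}. sets (borel :: real measure))"
    then have A0[measurable]: "A 0 \<in> sets borel" and A1[measurable]: "A 1 \<in> sets borel"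
      and A2[measurable]: "A 2 \<in> sets borel" and A3[measurable]: "A 3 \<in> sets borel" by auto
    define S where "S = {z. Re z \<in> A 0 \<and> Im z \<in> A 1}"
    define T where "T = {z. Re z \<in> A 2 \<and> Im z \<in> A 3}"
    have S: "S \<in> sets borel" unfolding S_def by measurable
    have T: "T \<in> sets borel" unfolding T_def by measurable
    have "(\<Inter>j\<in>{0,1,2,3}. G j -` A j \<inter> space M) = (\<lambda>x. (Z1 x, Z2 x)) -` (S \<times> T) \<inter> space M"
      by (auto simp: G_def S_def T_def)
    then have "prob (\<Inter>j\<in>{0,1,2,3}. G j -` A j \<inter> space M) = prob (Z1 -` S \<inter> space M) * prob (Z2 -` T \<inter> space M)"
      using indep_varD[OF ind S T] by simp
    also have "prob (Z1 -` S \<inter> space M) = prob ((\<lambda>x. (Re (Z1 x), Im (Z1 x))) -` (A 0 \<times> A 1) \<inter> space M)"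
      by (rule arg_cong[where f=prob]) (auto simp: S_def)
    also have "\<dots> = prob (G 0 -` A 0 \<inter> space M) * prob (G 1 -` A 1 \<inter> space M)"
      using indep_varD[OF i1 A0 A1] by (simp add: G_def)
    also have "prob (Z2 -` T \<inter> space M) = prob ((\<lambda>x. (Re (Z2 x), Im (Z2 x))) -` (A 2 \<times> A 3) \<inter> space M)"
      by (rule arg_cong[where f=prob]) (auto simp: T_def)
    also have "\<dots> = prob (G 2 -` A 2 \<inter> space M) * prob (G 3 -` A 3 \<inter> space M)"
      using indep_varD[OF i2 A2 A3] by (simp add: G_def)
    finally show "prob (\<Inter>j\<in>{0,1,2,3}. G j -` A j \<inter> space M) = (\<Prod>j\<in>{0,1,2,3}. prob (G j -` A j \<inter> space M))"
      by (simp add: mult_ac)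
  qed
  then show ?thesis using eq unfolding G_def by simp
qed

lemma (in prob_space) indep_var_lborel:
  assumes "indep_var borel X borel (Y :: 'a \<Rightarrow> real)"
  shows "indep_var lborel (X :: 'a \<Rightarrow> real) lborel Y"
proof -
  have "indep_var lborel (id \<circ> X) lborel (id \<circ> Y)"
    by (rule indep_var_compose[OF assms]) auto
  then show ?thesis by simp
qed

lemma (in prob_space) UW_dist:
  assumes IR: "CN_distributed M IR v1" "v1 \<ge> 0" and vm: "CN_distributed M vm v2" "v2 > 0"
    and ind: "indep_var borel IR borel vm"
  shows "distributed M lborel (\<lambda>\<omega>. Re (IR \<omega>) + Re (vm \<omega>)) (normal_density 0 (sqrt ((v1+v2)/2)))"
    and "distributed M lborel (\<lambda>\<omega>. Im (IR \<omega>) + Im (vm \<omega>)) (normal_density 0 (sqrt ((v1+v2)/2)))"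
    and "indep_var lborel (\<lambda>\<omega>. Re (IR \<omega>) + Re (vm \<omega>)) lborel (\<lambda>\<omega>. Im (IR \<omega>) + Im (vm \<omega>))"
proof -
  have IRm[measurable]: "IR \<in> borel_measurable M" using indep_var_rv1[OF ind] by simp
  have vmm[measurable]: "vm \<in> borel_measurable M" using indep_var_rv2[OF ind] by simp
  from vm have C: "distributed M lborel (\<lambda>\<omega>. Re (vm \<omega>)) (normal_density 0 (sqrt (v2 / 2)))"
    and D: "distributed M lborel (\<lambda>\<omega>. Im (vm \<omega>)) (normal_density 0 (sqrt (v2 / 2)))"
    and CD: "indep_var borel (\<lambda>\<omega>. Re (vm \<omega>)) borel (\<lambda>\<omega>. Im (vm \<omega>))"
    unfolding CN_distributed_def by auto
  have "(distributed M lborel (\<lambda>\<omega>. Re (IR \<omega>) + Re (vm \<omega>)) (normal_density 0 (sqrt ((v1+v2)/2)))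
    \<and> distributed M lborel (\<lambda>\<omega>. Im (IR \<omega>) + Im (vm \<omega>)) (normal_density 0 (sqrt ((v1+v2)/2))))
    \<and> indep_var lborel (\<lambda>\<omega>. Re (IR \<omega>) + Re (vm \<omega>)) lborel (\<lambda>\<omega>. Im (IR \<omega>) + Im (vm \<omega>))"
  proof (cases "v1 = 0")
    case True
    then have ae: "AE \<omega> in M. IR \<omega> = 0" using IR unfolding CN_distributed_def by auto
    have ae1: "AE \<omega> in M. Re (vm \<omega>) = Re (IR \<omega>) + Re (vm \<omega>)" using ae by eventually_elim auto
    have ae2: "AE \<omega> in M. Im (vm \<omega>) = Im (IR \<omega>) + Im (vm \<omega>)" using ae by eventually_elim auto
    show ?thesis
      using distributed_AE_cong[OF C ae1] distributed_AE_cong[OF D ae2]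
        indep_var_lborel[OF indep_var_AE_cong[OF CD ae1 ae2]] True
      by simp
  next
    case False
    then have v1: "v1 > 0" using IR by simp
    from IR False have A: "distributed M lborel (\<lambda>\<omega>. Re (IR \<omega>)) (normal_density 0 (sqrt (v1 / 2)))"
      and B: "distributed M lborel (\<lambda>\<omega>. Im (IR \<omega>)) (normal_density 0 (sqrt (v1 / 2)))"
      and AB: "indep_var borel (\<lambda>\<omega>. Re (IR \<omega>)) borel (\<lambda>\<omega>. Im (IR \<omega>))"
      unfolding CN_distributed_def by auto
    note F = four_indep[OF ind AB CD]
    have AC: "indep_var borel (\<lambda>\<omega>. Re (IR \<omega>)) borel (\<lambda>\<omega>. Re (vm \<omega>))"
      using indep_vars_pair[OF F, of 0 2] by simp
    have BD: "indep_var borel (\<lambda>\<omega>. Im (IR \<omega>)) borel (\<lambda>\<omega>. Im (vm \<omega>))"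
      using indep_vars_pair[OF F, of 1 3] by simp
    have UW: "indep_var borel (\<lambda>\<omega>. Re (IR \<omega>) + Re (vm \<omega>)) borel (\<lambda>\<omega>. Im (IR \<omega>) + Im (vm \<omega>))"
      using indep_vars_pair_sum[OF F, of 0 2 1 3] by simp
    have sq: "sqrt ((sqrt (v1/2))\<^sup>2 + (sqrt (v2/2))\<^sup>2) = sqrt ((v1+v2)/2)"
      using v1 vm(2) by (simp add: add_divide_distrib)
    show ?thesis
      using add_indep_normal[OF AC _ _ A C] add_indep_normal[OF BD _ _ B D] indep_var_lborel[OF UW]
        v1 vm(2) unfolding sq by simp
  qed
  then show "distributed M lborel (\<lambda>\<omega>. Re (IR \<omega>) + Re (vm \<omega>)) (normal_density 0 (sqrt ((v1+v2)/2)))"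
    and "distributed M lborel (\<lambda>\<omega>. Im (IR \<omega>) + Im (vm \<omega>)) (normal_density 0 (sqrt ((v1+v2)/2)))"
    and "indep_var lborel (\<lambda>\<omega>. Re (IR \<omega>) + Re (vm \<omega>)) lborel (\<lambda>\<omega>. Im (IR \<omega>) + Im (vm \<omega>))"
    by auto
qed

lemma nd_total: "s > 0 \<Longrightarrow> (\<integral>\<^sup>+w. ennreal (normal_density m s w) \<partial>lborel) = 1"
  by (subst nn_integral_eq_integral) auto

lemma slice:
  assumes s: "s > 0"
  shows "(\<integral>\<^sup>+u. \<integral>\<^sup>+w. ennreal (normal_density 0 s u * normal_density 0 s w * indicator {w. c < u\<^sup>2 + w\<^sup>2} w) \<partial>lborel \<partial>lborel)
       = ennreal (exp (- max 0 c / (2 * s\<^sup>2)))"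
proof (cases "c \<ge> 0")
  case True
  then show ?thesis using gauss2_tail[OF s True] by simp
next
  case False
  have "(\<integral>\<^sup>+u. \<integral>\<^sup>+w. ennreal (normal_density 0 s u * normal_density 0 s w * indicator {w. c < u\<^sup>2 + w\<^sup>2} w) \<partial>lborel \<partial>lborel)
      = (\<integral>\<^sup>+u. \<integral>\<^sup>+w. ennreal (normal_density 0 s u) * ennreal (normal_density 0 s w) \<partial>lborel \<partial>lborel)"
  proof (intro nn_integral_cong)
    fix u w :: real
    have "c < u\<^sup>2 + w\<^sup>2" using False by (smt (verit) zero_le_power2)
    then show "ennreal (normal_density 0 s u * normal_density 0 s w * indicator {w. c < u\<^sup>2 + w\<^sup>2} w)
      = ennreal (normal_density 0 s u) * ennreal (normal_density 0 s w)"
      by (simp add: ennreal_mult)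
  qed
  also have "\<dots> = (\<integral>\<^sup>+u. ennreal (normal_density 0 s u) * (\<integral>\<^sup>+w. ennreal (normal_density 0 s w) \<partial>lborel) \<partial>lborel)"
    by (intro nn_integral_cong nn_integral_cmult) auto
  also have "\<dots> = 1" by (simp add: nd_total[OF s])
  finally show ?thesis using False by simp
qed

lemma (in prob_space) prob_core:
  fixes X U W :: "'a \<Rightarrow> real"
  assumes X: "distributed M lborel X (normal_density \<mu> \<sigma>)"
    and U: "distributed M lborel U (normal_density 0 s)" and W: "distributed M lborel W (normal_density 0 s)"
    and iX: "distr M lborel X \<Otimes>\<^sub>M distr M (lborel \<Otimes>\<^sub>M lborel) (\<lambda>\<omega>. (U \<omega>, W \<omega>))
             = distr M (lborel \<Otimes>\<^sub>M (lborel \<Otimes>\<^sub>M lborel)) (\<lambda>\<omega>. (X \<omega>, (U \<omega>, W \<omega>)))"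
    and iUW: "indep_var lborel U lborel W"
    and s: "s > 0" and t: "t > 0"
  shows "emeasure M {\<omega> \<in> space M. (X \<omega>)\<^sup>2 - y < t * ((U \<omega>)\<^sup>2 + (W \<omega>)\<^sup>2)}
       = (\<integral>\<^sup>+x. ennreal (normal_density \<mu> \<sigma> x * exp (- max 0 (((x\<^sup>2 - y)/t)) / (2 * s\<^sup>2))) \<partial>lborel)"
proof -
  have sfl: "sigma_finite_measure (lborel::real measure)" by (rule lborel.sigma_finite_measure_axioms)
  have sf2: "sigma_finite_measure (lborel \<Otimes>\<^sub>M lborel :: (real \<times> real) measure)"
    by (rule sigma_finite_pair_measure) (rule sfl)+
  interpret L2: sigma_finite_measure "lborel \<Otimes>\<^sub>M lborel :: (real \<times> real) measure" by (rule sf2)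
  define Py where "Py = (\<lambda>(u::real, w::real). ennreal (normal_density 0 s u) * ennreal (normal_density 0 s w))"
  have UWd: "distributed M (lborel \<Otimes>\<^sub>M lborel) (\<lambda>\<omega>. (U \<omega>, W \<omega>)) Py"
    using distributed_joint_indep[OF sfl sfl U W iUW] unfolding Py_def by simp
  have J: "distributed M (lborel \<Otimes>\<^sub>M (lborel \<Otimes>\<^sub>M lborel)) (\<lambda>\<omega>. (X \<omega>, (U \<omega>, W \<omega>)))
      (\<lambda>(x, p). ennreal (normal_density \<mu> \<sigma> x) * Py p)"
    using distributed_joint_indep'[OF sfl sf2 X UWd iX] by simp
  define A where "A = {z \<in> space (lborel \<Otimes>\<^sub>M (lborel \<Otimes>\<^sub>M lborel)). (fst z)\<^sup>2 - y < t * ((fst (snd z))\<^sup>2 + (snd (snd z))\<^sup>2)}"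
  have A[measurable]: "A \<in> sets (lborel \<Otimes>\<^sub>M (lborel \<Otimes>\<^sub>M lborel))" unfolding A_def by measurable
  have Xm[measurable]: "X \<in> borel_measurable M" using X by (auto simp: distributed_def)
  have Um[measurable]: "U \<in> borel_measurable M" using U by (auto simp: distributed_def)
  have Wm[measurable]: "W \<in> borel_measurable M" using W by (auto simp: distributed_def)
  have Pym[measurable]: "Py \<in> borel_measurable (lborel \<Otimes>\<^sub>M lborel)" unfolding Py_def by measurable
  have "emeasure M {\<omega> \<in> space M. (X \<omega>)\<^sup>2 - y < t * ((U \<omega>)\<^sup>2 + (W \<omega>)\<^sup>2)}
      = emeasure M ((\<lambda>\<omega>. (X \<omega>, (U \<omega>, W \<omega>))) -` A \<inter> space M)"
    by (rule arg_cong[where f="emeasure M"]) (auto simp: A_def space_pair_measure)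
  also have "\<dots> = (\<integral>\<^sup>+z. (\<lambda>(x, p). ennreal (normal_density \<mu> \<sigma> x) * Py p) z * indicator A z \<partial>(lborel \<Otimes>\<^sub>M (lborel \<Otimes>\<^sub>M lborel)))"
    by (rule distributed_emeasure[OF J A])
  also have "\<dots> = (\<integral>\<^sup>+x. \<integral>\<^sup>+p. ennreal (normal_density \<mu> \<sigma> x) * Py p * indicator A (x, p) \<partial>(lborel \<Otimes>\<^sub>M lborel) \<partial>lborel)"
    by (subst sigma_finite_measure.nn_integral_fst[OF sf2, symmetric]) measurable
  also have "\<dots> = (\<integral>\<^sup>+x. ennreal (normal_density \<mu> \<sigma> x * exp (- max 0 (((x\<^sup>2 - y)/t)) / (2 * s\<^sup>2))) \<partial>lborel)"
  proof (rule nn_integral_cong)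
    fix x :: real
    define c where "c = (x\<^sup>2 - y)/t"
    have Am: "(\<lambda>p. indicator A (x, p)) \<in> borel_measurable (lborel \<Otimes>\<^sub>M lborel)"
      using A by measurable
    have "(\<integral>\<^sup>+p. ennreal (normal_density \<mu> \<sigma> x) * Py p * indicator A (x, p) \<partial>(lborel \<Otimes>\<^sub>M lborel))
        = (\<integral>\<^sup>+u. \<integral>\<^sup>+w. ennreal (normal_density \<mu> \<sigma> x) * Py (u, w) * indicator A (x, (u, w)) \<partial>lborel \<partial>lborel)"
      by (rule lborel.nn_integral_fst[symmetric]) (use Am in measurable)
    also have "\<dots> = (\<integral>\<^sup>+u. \<integral>\<^sup>+w. ennreal (normal_density \<mu> \<sigma> x) *
        ennreal (normal_density 0 s u * normal_density 0 s w * indicator {w. c < u\<^sup>2 + w\<^sup>2} w) \<partial>lborel \<partial>lborel)"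
    proof (intro nn_integral_cong)
      fix u w :: real
      have iff: "(x, (u, w)) \<in> A \<longleftrightarrow> c < u\<^sup>2 + w\<^sup>2"
        using t by (simp add: A_def c_def space_pair_measure pos_divide_less_eq mult.commute)
      show "ennreal (normal_density \<mu> \<sigma> x) * Py (u, w) * indicator A (x, (u, w)) =
        ennreal (normal_density \<mu> \<sigma> x) * ennreal (normal_density 0 s u * normal_density 0 s w * indicator {w. c < u\<^sup>2 + w\<^sup>2} w)"
        by (cases "c < u\<^sup>2 + w\<^sup>2") (simp_all add: iff Py_def ennreal_mult mult.assoc)
    qed
    also have "\<dots> = (\<integral>\<^sup>+u. ennreal (normal_density \<mu> \<sigma> x) * \<integral>\<^sup>+w.
        ennreal (normal_density 0 s u * normal_density 0 s w * indicator {w. c < u\<^sup>2 + w\<^sup>2} w) \<partial>lborel \<partial>lborel)"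
      by (intro nn_integral_cong nn_integral_cmult) auto
    also have "\<dots> = ennreal (normal_density \<mu> \<sigma> x) * (\<integral>\<^sup>+u. \<integral>\<^sup>+w.
        ennreal (normal_density 0 s u * normal_density 0 s w * indicator {w. c < u\<^sup>2 + w\<^sup>2} w) \<partial>lborel \<partial>lborel)"
      by (rule nn_integral_cmult) measurable
    also have "\<dots> = ennreal (normal_density \<mu> \<sigma> x) * ennreal (exp (- max 0 c / (2 * s\<^sup>2)))"
      unfolding slice[OF s] ..
    also have "\<dots> = ennreal (normal_density \<mu> \<sigma> x * exp (- max 0 c / (2 * s\<^sup>2)))"
      by (simp add: ennreal_mult)
    finally show "(\<integral>\<^sup>+p. ennreal (normal_density \<mu> \<sigma> x) * Py p * indicator A (x, p) \<partial>(lborel \<Otimes>\<^sub>M lborel))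
        = ennreal (normal_density \<mu> \<sigma> x * exp (- max 0 (((x\<^sup>2 - y)/t)) / (2 * s\<^sup>2)))"
      unfolding c_def .
  qed
  finally show ?thesis .
qed

lemma (in prob_space) indep_var_map_distr:
  assumes ind: "indep_var S X T Y" and f[measurable]: "f \<in> measurable S S'" and g[measurable]: "g \<in> measurable T T'"
  shows "distr M S' (\<lambda>\<omega>. f (X \<omega>)) \<Otimes>\<^sub>M distr M T' (\<lambda>\<omega>. g (Y \<omega>))
       = distr M (S' \<Otimes>\<^sub>M T') (\<lambda>\<omega>. (f (X \<omega>), g (Y \<omega>)))"
proof -
  have X[measurable]: "X \<in> measurable M S" using indep_var_rv1[OF ind] .
  have Y[measurable]: "Y \<in> measurable M T" using indep_var_rv2[OF ind] .
  have d: "distr M S X \<Otimes>\<^sub>M distr M T Y = distr M (S \<Otimes>\<^sub>M T) (\<lambda>x. (X x, Y x))"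
    using ind indep_var_distribution_eq by blast
  have ps: "prob_space (distr (distr M T Y) T' g)"
    by (intro prob_space.prob_space_distr prob_space_distr) auto
  have sf: "sigma_finite_measure (distr (distr M T Y) T' g)"
    using ps by (rule prob_space_imp_sigma_finite)
  have "distr M S' (\<lambda>\<omega>. f (X \<omega>)) \<Otimes>\<^sub>M distr M T' (\<lambda>\<omega>. g (Y \<omega>))
      = distr (distr M S X) S' f \<Otimes>\<^sub>M distr (distr M T Y) T' g"
    by (simp add: distr_distr comp_def)
  also have "\<dots> = distr (distr M S X \<Otimes>\<^sub>M distr M T Y) (S' \<Otimes>\<^sub>M T') (\<lambda>(x, y). (f x, g y))"
    by (rule pair_measure_distr) (auto simp: sf)
  also have "\<dots> = distr (distr M (S \<Otimes>\<^sub>M T) (\<lambda>x. (X x, Y x))) (S' \<Otimes>\<^sub>M T') (\<lambda>(x, y). (f x, g y))"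
    unfolding d ..
  also have "\<dots> = distr M (S' \<Otimes>\<^sub>M T') (\<lambda>\<omega>. (f (X \<omega>), g (Y \<omega>)))"
    by (subst distr_distr) (auto simp: comp_def)
  finally show ?thesis .
qed

theorem proposition1:
  fixes M :: "'a measure" and X :: "'a \<Rightarrow> real" and IR vm :: "'a \<Rightarrow> complex"
    and LRIS LBS rho g :: real and N Nm :: nat
  assumes "prob_space M"
    and "LRIS > 0" and "LBS > 0" and "rho > 0" and "g > 0"
    and "1 \<le> Nm" and "Nm \<le> N"
    and "distributed M lborel X (normal_density (mu1 LRIS Nm) (sqrt (s1sq LRIS Nm)))"
    and "CN_distributed M IR (LRIS * (real N - real Nm))"
    and "CN_distributed M vm LBS"
    and "prob_space.indep_vars M (\<lambda>_. borel)
           (\<lambda>i \<omega>. [complex_of_real (X \<omega>), IR \<omega>, vm \<omega>] ! i) {0..<3}"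
  shows "measure M {\<omega> \<in> space M.
            log 2 (1 + (X \<omega>)\<^sup>2 / ((cmod (IR \<omega> + vm \<omega>))\<^sup>2 + 1 / rho)) < g}
       = (let \<mu> = mu1 LRIS Nm; a = s1sq LRIS Nm; b = s2sq LRIS LBS N Nm g; y = yval g rho in
          1 - marcumQ (1/2) (\<mu> / sqrt a) (sqrt (y / a))
          + (b / (a + b)) powr (1/2) * exp (y / (2 * b)) * exp (-(\<mu>\<^sup>2) / (2 * (a + b)))
            * marcumQ (1/2) (\<mu> / sqrt a * sqrt (b / (a + b))) (sqrt (y * (a + b) / (a * b))))"
proof -
  interpret P: prob_space M by fact
  note LRIS = \<open>LRIS > 0\<close> and LBS = \<open>LBS > 0\<close> and rho = \<open>rho > 0\<close> and g = \<open>g > 0\<close>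
  note Nm = \<open>1 \<le> Nm\<close> \<open>Nm \<le> N\<close>
  define t where "t = 2 powr g - 1"
  define v1 where "v1 = LRIS * (real N - real Nm)"
  define V where "V = v1 + LBS"
  define s where "s = sqrt (V / 2)"
  define U where "U = (\<lambda>\<omega>. Re (IR \<omega>) + Re (vm \<omega>))"
  define W where "W = (\<lambda>\<omega>. Im (IR \<omega>) + Im (vm \<omega>))"
  define y where "y = yval g rho"
  define a where "a = s1sq LRIS Nm"
  define b where "b = s2sq LRIS LBS N Nm g"
  define \<mu> where "\<mu> = mu1 LRIS Nm"
  have t: "t > 0"
  proof -
    have "2 powr 0 < 2 powr g" using g by (rule powr_less_mono) simp
    then show ?thesis by (simp add: t_def)
  qed
  have v1: "v1 \<ge> 0" using LRIS Nm by (simp add: v1_def)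
  have V: "V > 0" using v1 LBS by (simp add: V_def)
  have s: "s > 0" using V by (simp add: s_def)
  have y: "y > 0" using t rho by (simp add: y_def yval_def t_def[symmetric])
  have a: "a > 0" using LRIS Nm pi_less_4 by (simp add: a_def s1sq_def)
  have bV: "b = t * s\<^sup>2" using V by (simp add: b_def s2sq_def t_def s_def V_def v1_def)
  have b: "b > 0" using bV t s by simp
  have mu: "\<mu> > 0" using LRIS Nm by (simp add: \<mu>_def mu1_def)
  define F where "F = (\<lambda>i \<omega>. [complex_of_real (X \<omega>), IR \<omega>, vm \<omega>] ! i)"
  have ind: "P.indep_vars (\<lambda>_. borel) F {0..<3}" using assms(11) by (simp add: F_def)
  have iIRvm: "P.indep_var borel IR borel vm"
    using P.indep_vars_pair[OF ind, of 1 2] by (simp add: F_def)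
  have UW: "distributed M lborel U (normal_density 0 s)" "distributed M lborel W (normal_density 0 s)"
      "P.indep_var lborel U lborel W"
    using P.UW_dist[OF assms(9) _ assms(10) LBS iIRvm] v1
    by (simp_all add: U_def W_def s_def V_def v1_def)
  have iX: "distr M lborel X \<Otimes>\<^sub>M distr M (lborel \<Otimes>\<^sub>M lborel) (\<lambda>\<omega>. (U \<omega>, W \<omega>))
      = distr M (lborel \<Otimes>\<^sub>M (lborel \<Otimes>\<^sub>M lborel)) (\<lambda>\<omega>. (X \<omega>, (U \<omega>, W \<omega>)))"
  proof -
    have r: "P.indep_var (Pi\<^sub>M {0} (\<lambda>_. borel)) (\<lambda>\<omega>. restrict (\<lambda>i. F i \<omega>) {0})
                         (Pi\<^sub>M {1,2} (\<lambda>_. borel)) (\<lambda>\<omega>. restrict (\<lambda>i. F i \<omega>) {1,2})"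
      by (rule P.indep_var_restrict[OF ind]) auto
    have f: "(\<lambda>h. Re (h 0)) \<in> measurable (Pi\<^sub>M {0::nat} (\<lambda>_. borel)) lborel"
      by simp measurable
    have gm: "(\<lambda>h. (Re (h 1) + Re (h 2), Im (h 1) + Im (h 2))) \<in> measurable (Pi\<^sub>M {1::nat,2} (\<lambda>_. borel)) (lborel \<Otimes>\<^sub>M lborel)"
      by (intro measurable_Pair) (simp_all, measurable)
    have e1: "(\<lambda>\<omega>. Re (restrict (\<lambda>i. F i \<omega>) {0} 0)) = X" by (simp add: F_def)
    have e2: "(\<lambda>\<omega>. (Re (restrict (\<lambda>i. F i \<omega>) {1,2} 1) + Re (restrict (\<lambda>i. F i \<omega>) {1,2} 2),
                     Im (restrict (\<lambda>i. F i \<omega>) {1,2} 1) + Im (restrict (\<lambda>i. F i \<omega>) {1,2} 2))) = (\<lambda>\<omega>. (U \<omega>, W \<omega>))"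
      by (simp add: F_def U_def W_def)
    have e3: "(\<lambda>\<omega>. (Re (restrict (\<lambda>i. F i \<omega>) {0} 0),
                     (Re (restrict (\<lambda>i. F i \<omega>) {1,2} 1) + Re (restrict (\<lambda>i. F i \<omega>) {1,2} 2),
                     Im (restrict (\<lambda>i. F i \<omega>) {1,2} 1) + Im (restrict (\<lambda>i. F i \<omega>) {1,2} 2))))
              = (\<lambda>\<omega>. (X \<omega>, (U \<omega>, W \<omega>)))"
      by (simp add: F_def U_def W_def)
    show ?thesis using P.indep_var_map_distr[OF r f gm] unfolding e1 e2 e3 .
  qed
  have core: "emeasure M {\<omega> \<in> space M. (X \<omega>)\<^sup>2 - y < t * ((U \<omega>)\<^sup>2 + (W \<omega>)\<^sup>2)}
       = (\<integral>\<^sup>+x. ennreal (normal_density \<mu> (sqrt a) x * exp (- max 0 (((x\<^sup>2 - y)/t)) / (2 * s\<^sup>2))) \<partial>lborel)"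
    using P.prob_core[OF assms(8) UW(1) UW(2) iX UW(3) s t] by (simp add: a_def \<mu>_def)
  have expeq: "exp (- max 0 (((x\<^sup>2 - y)/t)) / (2 * s\<^sup>2)) = exp (- max 0 (x\<^sup>2 - y) / (2 * b))" for x
  proof -
    have "max 0 ((x\<^sup>2 - y)/t) = max 0 (x\<^sup>2 - y) / t" using t by (simp add: max_divide_distrib_right)
    then show ?thesis using t s by (simp add: bV field_simps)
  qed
  define h where "h = (\<lambda>x. normal_density \<mu> (sqrt a) x * exp (- max 0 (x\<^sup>2 - y) / (2 * b)))"
  have sa: "sqrt a > 0" using a by simp
  have hint: "integrable lborel h"
  proof (rule Bochner_Integration.integrable_bound[OF integrable_normal_density[OF sa]])
    show "h \<in> borel_measurable lborel" unfolding h_def by measurable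
    show "AE x in lborel. norm (h x) \<le> norm (normal_density \<mu> (sqrt a) x)"
    proof (rule AE_I2)
      fix x
      have "exp (- max 0 (x\<^sup>2 - y) / (2 * b)) \<le> 1" using b by simp
      then show "norm (h x) \<le> norm (normal_density \<mu> (sqrt a) x)"
        unfolding h_def by (simp add: mult_left_le)
    qed
  qed
  have hnn: "0 \<le> h x" for x unfolding h_def by simp
  have ev: "{\<omega> \<in> space M. log 2 (1 + (X \<omega>)\<^sup>2 / ((cmod (IR \<omega> + vm \<omega>))\<^sup>2 + 1 / rho)) < g}
      = {\<omega> \<in> space M. (X \<omega>)\<^sup>2 - y < t * ((U \<omega>)\<^sup>2 + (W \<omega>)\<^sup>2)}"
  proof (intro Collect_cong conj_cong refl)
    fix \<omega>
    define D where "D = (cmod (IR \<omega> + vm \<omega>))\<^sup>2 + 1 / rho"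
    have D: "D > 0" using rho by (simp add: D_def add_nonneg_pos)
    have q: "1 + (X \<omega>)\<^sup>2 / D > 0" using D by (simp add: add_pos_nonneg)
    have "log 2 (1 + (X \<omega>)\<^sup>2 / D) < g \<longleftrightarrow> 1 + (X \<omega>)\<^sup>2 / D < 2 powr g"
      using q by (simp add: log_less_iff)
    also have "\<dots> \<longleftrightarrow> (X \<omega>)\<^sup>2 / D < t" by (simp add: t_def; linarith)
    also have "\<dots> \<longleftrightarrow> (X \<omega>)\<^sup>2 < t * D" using D by (simp add: pos_divide_less_eq mult.commute)
    also have "t * D = t * ((U \<omega>)\<^sup>2 + (W \<omega>)\<^sup>2) + y"
      by (simp add: D_def cmod_power2 U_def W_def y_def yval_def t_def algebra_simps diff_divide_distrib)
    finally show "log 2 (1 + (X \<omega>)\<^sup>2 / ((cmod (IR \<omega> + vm \<omega>))\<^sup>2 + 1 / rho)) < g \<longleftrightarrow>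
        (X \<omega>)\<^sup>2 - y < t * ((U \<omega>)\<^sup>2 + (W \<omega>)\<^sup>2)"
      unfolding D_def by linarith
  qed
  have "ennreal (measure M {\<omega> \<in> space M. (X \<omega>)\<^sup>2 - y < t * ((U \<omega>)\<^sup>2 + (W \<omega>)\<^sup>2)})
      = (\<integral>\<^sup>+x. ennreal (h x) \<partial>lborel)"
    unfolding P.emeasure_eq_measure[symmetric] core h_def expeq ..
  also have "\<dots> = ennreal (\<integral>x. h x \<partial>lborel)"
    by (rule nn_integral_eq_integral[OF hint]) (simp add: hnn)
  finally have "measure M {\<omega> \<in> space M. (X \<omega>)\<^sup>2 - y < t * ((U \<omega>)\<^sup>2 + (W \<omega>)\<^sup>2)} = (\<integral>x. h x \<partial>lborel)"
    using hnn by (simp add: integral_nonneg)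
  also have "\<dots> = 1 - marcumQ (1/2) (\<mu> / sqrt a) (sqrt (y / a))
      + (b / (a + b)) powr (1/2) * exp (y / (2 * b)) * exp (-(\<mu>\<^sup>2) / (2 * (a + b)))
        * marcumQ (1/2) (\<mu> / sqrt a * sqrt (b / (a + b))) (sqrt (y * (a + b) / (a * b)))"
    unfolding h_def by (rule final_real[OF a b mu y])
  finally show ?thesis unfolding ev by (simp add: Let_def a_def b_def \<mu>_def y_def)
qed

end
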